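(* Let $G=(V,E)$ be a connected undirected unweighted graph on $N$ vertices and let $r>1$. For every mutant set $S$ with $\emptyset\ne S\ne V$ and every edge $\{u,v\}\in E$ with $u\in S$, $v\notin S$, $$\psi_{u,v}^{\delta=1/2}(S):=\frac12\cdot\frac{1}{w(S)}\left(\frac{r}{\deg(u)}-\frac{1}{\deg(v)}\right)+\frac12\cdot\frac1N\left(\frac{r}{w_v(S)}-\frac{1}{w_u(S)}\right)\ \ge\ \frac{r-1}{rN^3},$$ and moreover $\mathsf{AT}_r^{\delta=1/2}(G)\le\frac{r}{r-1}\cdot N^4$.
   Context: Mixed $\delta$-updating on $G$: each vertex holds a mutant (fitness $r$) or wild-type (fitness $1$); $f_S(x)\in\{1,r\}$ is the fitness at $x$ when $S$ is the mutant set. At each step, with probability $\delta$ a death-Birth step: choose $v$ uniformly to die, choose a neighbor $u$ of $v$ with probability proportional to $f_S(u)$, $u$ copies its type onto $v$; with probability $1-\delta$ a Birth-death step: choose $u$ with probability proportional to $f_S(u)$ among all vertices, choose a uniformly random neighbor $v$ of $u$, $u$ copies its type onto $v$. Notation: $w(S)=\sum_{x\in V}f_S(x)=N+(r-1)|S|$, and $w_x(S)=\sum_{y:\{x,y\}\in E}f_S(y)$ is the total fitness of the neighbors of $x$. $\mathsf{AT}_r^\delta(G,S_0)$ is the expected number of steps until the population is all mutant or all wild-type starting from $S_0$, and $\mathsf{AT}_r^\delta(G)=\max_{S_0\subseteq V}\mathsf{AT}_r^\delta(G,S_0)$. *)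

theory Defs
  imports Complex_Main "HOL-Library.Extended_Nonnegative_Real"
begin

definition simple_graph :: "'a set \<Rightarrow> ('a \<Rightarrow> 'a \<Rightarrow> bool) \<Rightarrow> bool" where
  "simple_graph V E \<longleftrightarrow> finite V \<and> V \<noteq> {} \<and>
     (\<forall>x y. E x y \<longrightarrow> x \<in> V \<and> y \<in> V) \<and>
     (\<forall>x y. E x y \<longrightarrow> E y x) \<and> (\<forall>x. \<not> E x x)"

definition connected_graph :: "'a set \<Rightarrow> ('a \<Rightarrow> 'a \<Rightarrow> bool) \<Rightarrow> bool" where
  "connected_graph V E \<longleftrightarrow> simple_graph V E \<and> (\<forall>x\<in>V. \<forall>y\<in>V. E\<^sup>*\<^sup>* x y)"

definition nbrs :: "'a set \<Rightarrow> ('a \<Rightarrow> 'a \<Rightarrow> bool) \<Rightarrow> 'a \<Rightarrow> 'a set" where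
  "nbrs V E x = {y \<in> V. E x y}"

definition deg :: "'a set \<Rightarrow> ('a \<Rightarrow> 'a \<Rightarrow> bool) \<Rightarrow> 'a \<Rightarrow> nat" where
  "deg V E x = card (nbrs V E x)"

definition fit :: "real \<Rightarrow> 'a set \<Rightarrow> 'a \<Rightarrow> real" where
  "fit r S x = (if x \<in> S then r else 1)"

definition wtot :: "'a set \<Rightarrow> real \<Rightarrow> 'a set \<Rightarrow> real" where
  "wtot V r S = (\<Sum>x\<in>V. fit r S x)"

definition wnb :: "'a set \<Rightarrow> ('a \<Rightarrow> 'a \<Rightarrow> bool) \<Rightarrow> real \<Rightarrow> 'a set \<Rightarrow> 'a \<Rightarrow> real" where
  "wnb V E r S x = (\<Sum>y\<in>nbrs V E x. fit r S y)"

definition psi :: "'a set \<Rightarrow> ('a \<Rightarrow> 'a \<Rightarrow> bool) \<Rightarrow> real \<Rightarrow> real \<Rightarrow> 'a set \<Rightarrow> 'a \<Rightarrow> 'a \<Rightarrow> real" where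
  "psi V E r \<delta> S u v =
     (1 - \<delta>) * (1 / wtot V r S) * (r / real (deg V E u) - 1 / real (deg V E v))
   + \<delta> * (1 / real (card V)) * (r / wnb V E r S v - 1 / wnb V E r S u)"

text \<open>Resulting mutant set after u copies its type onto v.\<close>
definition copy_step :: "'a set \<Rightarrow> 'a \<Rightarrow> 'a \<Rightarrow> 'a set" where
  "copy_step S u v = (if u \<in> S then insert v S else S - {v})"

definition trans_prob :: "'a set \<Rightarrow> ('a \<Rightarrow> 'a \<Rightarrow> bool) \<Rightarrow> real \<Rightarrow> real \<Rightarrow> 'a set \<Rightarrow> 'a set \<Rightarrow> real" where
  "trans_prob V E r \<delta> S T =
     \<delta> * (\<Sum>v\<in>V. (1 / real (card V)) *
            (\<Sum>u\<in>nbrs V E v. (fit r S u / wnb V E r S v) * (if copy_step S u v = T then 1 else 0)))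
   + (1 - \<delta>) * (\<Sum>u\<in>V. (fit r S u / wtot V r S) *
            (\<Sum>v\<in>nbrs V E u. (1 / real (deg V E u)) * (if copy_step S u v = T then 1 else 0)))"

definition absorbed :: "'a set \<Rightarrow> 'a set \<Rightarrow> bool" where
  "absorbed V S \<longleftrightarrow> S = {} \<or> S = V"

text \<open>Probability that the process started in S is not yet absorbed after n steps, P(T > n).\<close>
fun not_absorbed :: "'a set \<Rightarrow> ('a \<Rightarrow> 'a \<Rightarrow> bool) \<Rightarrow> real \<Rightarrow> real \<Rightarrow> nat \<Rightarrow> 'a set \<Rightarrow> real" where
  "not_absorbed V E r \<delta> 0 S = (if absorbed V S then 0 else 1)"
| "not_absorbed V E r \<delta> (Suc n) S =
     (if absorbed V S then 0
      else (\<Sum>T\<in>Pow V. trans_prob V E r \<delta> S T * not_absorbed V E r \<delta> n T))"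

text \<open>Expected absorption time AT(G,S0) = sum_n P(T > n) (possibly infinite).\<close>
definition AT_from :: "'a set \<Rightarrow> ('a \<Rightarrow> 'a \<Rightarrow> bool) \<Rightarrow> real \<Rightarrow> real \<Rightarrow> 'a set \<Rightarrow> ennreal" where
  "AT_from V E r \<delta> S0 = (\<Sum>n. ennreal (not_absorbed V E r \<delta> n S0))"

definition AT :: "'a set \<Rightarrow> ('a \<Rightarrow> 'a \<Rightarrow> bool) \<Rightarrow> real \<Rightarrow> real \<Rightarrow> ennreal" where
  "AT V E r \<delta> = (SUP S0\<in>Pow V. AT_from V E r \<delta> S0)"

end

theory Submission
  imports Defs
begin


lemma sg_facts:
  assumes "simple_graph V E"
  shows "finite V" "E x y \<Longrightarrow> x \<in> V" "E x y \<Longrightarrow> y \<in> V" "E x y \<Longrightarrow> E y x" "\<not> E x x"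
  using assms unfolding simple_graph_def by blast+

lemma nbrs_finite: "simple_graph V E \<Longrightarrow> finite (nbrs V E x)"
  unfolding nbrs_def by (auto dest: sg_facts(1))

lemma deg_ge1: "simple_graph V E \<Longrightarrow> E x y \<Longrightarrow> 1 \<le> deg V E x"
  unfolding deg_def
proof -
  assume g: "simple_graph V E" and e: "E x y"
  have "y \<in> nbrs V E x" using sg_facts[OF g] e unfolding nbrs_def by auto
  then have "nbrs V E x \<noteq> {}" by auto
  then show "1 \<le> card (nbrs V E x)" using nbrs_finite[OF g]
    by (simp add: Suc_le_eq card_gt_0_iff)
qed

lemma deg_le: "simple_graph V E \<Longrightarrow> x \<in> V \<Longrightarrow> deg V E x \<le> card V - 1"
  unfolding deg_def
proof -
  assume g: "simple_graph V E" and x: "x \<in> V"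
  have "nbrs V E x \<subseteq> V - {x}" using sg_facts[OF g] unfolding nbrs_def by auto
  then have "card (nbrs V E x) \<le> card (V - {x})"
    using sg_facts(1)[OF g] by (intro card_mono) auto
  then show "card (nbrs V E x) \<le> card V - 1" using x sg_facts(1)[OF g] by simp
qed

lemma wtot_eq:
  assumes "finite V" "S \<subseteq> V"
  shows "wtot V r S = real (card V) + (r - 1) * real (card S)"
proof -
  have "wtot V r S = (\<Sum>x\<in>S. fit r S x) + (\<Sum>x\<in>V - S. fit r S x)"
    unfolding wtot_def using assms by (metis sum.subset_diff add.commute)
  also have "\<dots> = r * card S + card (V - S)" by (simp add: fit_def)
  also have "card (V - S) = card V - card S" using assms by (simp add: card_Diff_subset finite_subset)
  finally show ?thesis using assms card_mono[OF assms] by (simp add: of_nat_diff algebra_simps)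
qed

lemma wnb_le: "r \<ge> 1 \<Longrightarrow> wnb V E r S x \<le> r * deg V E x"
  unfolding wnb_def deg_def
proof -
  assume "r \<ge> 1"
  have "(\<Sum>y\<in>nbrs V E x. fit r S y) \<le> (\<Sum>y\<in>nbrs V E x. r)"
    by (rule sum_mono) (use \<open>r \<ge> 1\<close> in \<open>simp add: fit_def\<close>)
  then show "(\<Sum>y\<in>nbrs V E x. fit r S y) \<le> r * real (card (nbrs V E x))" by (simp add: mult.commute)
qed

lemma wnb_ge: "r \<ge> 1 \<Longrightarrow> wnb V E r S x \<ge> deg V E x"
  unfolding wnb_def deg_def
proof -
  assume "r \<ge> 1"
  have "(\<Sum>y\<in>nbrs V E x. fit r S y) \<ge> (\<Sum>y\<in>nbrs V E x. 1)"
    by (rule sum_mono) (use \<open>r \<ge> 1\<close> in \<open>simp add: fit_def\<close>)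
  then show "(\<Sum>y\<in>nbrs V E x. fit r S y) \<ge> real (card (nbrs V E x))" by simp
qed

lemma psi_bound:
  assumes g: "simple_graph V E" and r: "r > 1" and SV: "S \<subseteq> V"
    and e: "E u v" and uS: "u \<in> S" and vS: "v \<notin> S"
  shows "psi V E r (1/2) S u v \<ge> (r - 1) / (r * real (card V) ^ 3)"
proof -
  let ?N = "real (card V)"
  have fin: "finite V" using sg_facts[OF g] by auto
  have uV: "u \<in> V" and vV: "v \<in> V" using sg_facts[OF g] e by auto
  have uv: "u \<noteq> v" using uS vS by auto
  have "{u, v} \<subseteq> V" using uV vV by auto
  hence "card {u,v} \<le> card V" using fin by (intro card_mono) auto
  hence N2: "card V \<ge> 2" using uv by simp
  define du where "du = real (deg V E u)"
  define dv where "dv = real (deg V E v)"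
  define s where "s = real (card S)"
  define w where "w = wtot V r S"
  define wu where "wu = wnb V E r S u"
  define wv where "wv = wnb V E r S v"
  have du1: "du \<ge> 1" using deg_ge1[OF g e] unfolding du_def by simp
  have dv1: "dv \<ge> 1" using deg_ge1[OF g sg_facts(4)[OF g e]] unfolding dv_def by simp
  have duN: "du \<le> ?N - 1" using deg_le[OF g uV] N2 unfolding du_def by (simp add: of_nat_diff)
  have dvN: "dv \<le> ?N - 1" using deg_le[OF g vV] N2 unfolding dv_def by (simp add: of_nat_diff)
  have s1: "s \<ge> 1" using uS fin SV unfolding s_def
    by (metis One_nat_def Suc_leI card_gt_0_iff empty_iff finite_subset of_nat_1 of_nat_le_iff)
  have "card S < card V" using SV vS vV fin by (metis psubsetI psubset_card_mono)
  hence sN: "s \<le> ?N - 1" unfolding s_def by linarith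
  have w: "w = ?N + (r - 1) * s" unfolding w_def s_def using wtot_eq[OF fin SV] .
  have wv: "wv \<le> r * dv" unfolding wv_def dv_def by (rule wnb_le) (use r in simp)
  have wu: "wu \<ge> du" unfolding wu_def du_def by (rule wnb_ge) (use r in simp)
  have N2': "?N \<ge> 2" using N2 by simp
  have rs0: "(r-1)*s \<ge> 0" using r s1 by simp
  have wpos: "w > 0" using w rs0 N2' by linarith
  have "(r-1)*s \<le> (r-1)*(?N-1)" using r sN by (intro mult_left_mono) auto
  moreover have "(r-1)*(?N-1) = r*?N - r - ?N + 1" by (simp add: algebra_simps)
  ultimately have wle: "w \<le> r * ?N" using w r by linarith
  have wv1: "wv \<ge> dv" unfolding wv_def dv_def by (rule wnb_ge) (use r in simp)
  have wuv: "wv > 0" "wu > 0" using wu wv1 du1 dv1 by linarith+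
  have psi: "psi V E r (1/2) S u v = 1/2 * (1/w) * (r/du - 1/dv) + 1/2 * (1/?N) * (r/wv - 1/wu)"
    unfolding psi_def du_def dv_def w_def wu_def wv_def by simp
  have t1: "r/wv \<ge> 1/dv"
  proof -
    have "r/wv \<ge> r/(r*dv)" using wv wuv dv1 r by (intro divide_left_mono) auto
    thus ?thesis using r by simp
  qed
  have t2: "1/wu \<le> 1/du" using wu du1 by (simp add: frac_le)
  define X where "X = 1/du"
  define Y where "Y = 1/dv"
  have X: "X \<ge> 1/(?N - 1)" unfolding X_def using duN du1 by (simp add: frac_le)
  have Y: "Y \<ge> 1/(?N - 1)" unfolding Y_def using dvN dv1 by (simp add: frac_le)
  have ca: "r/w - 1/?N = (r-1)*(?N - s)/(w*?N)" using wpos N2' w by (simp add: field_simps)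
  have cb: "1/?N - 1/w = (r-1)*s/(w*?N)" using wpos N2' w by (simp add: field_simps)
  have ca0: "r/w - 1/?N \<ge> 0" unfolding ca using r sN wpos N2' by simp
  have cb0: "1/?N - 1/w \<ge> 0" unfolding cb using r s1 wpos N2' by simp
  have P1: "2 * psi V E r (1/2) S u v \<ge> (r/du - 1/dv)/w + (1/dv - 1/du)/?N"
  proof -
    have "r/wv - 1/wu \<ge> 1/dv - 1/du" using t1 t2 by linarith
    hence "(1/?N) * (r/wv - 1/wu) \<ge> (1/?N) * (1/dv - 1/du)" using N2' by (intro mult_left_mono) auto
    moreover have "2 * psi V E r (1/2) S u v = (r/du - 1/dv)/w + (1/?N) * (r/wv - 1/wu)"
    proof -
      have "\<And>a b. 2*(1/2*(1/w)*a + 1/2*(1/?N)*b) = a/w + (1/?N)*b"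
        using wpos N2' by (simp add: field_simps)
      thus ?thesis unfolding psi by blast
    qed
    ultimately show ?thesis by simp
  qed
  have P2: "(r/du - 1/dv)/w + (1/dv - 1/du)/?N = X * (r/w - 1/?N) + Y * (1/?N - 1/w)"
    unfolding X_def Y_def using wpos N2' du1 dv1 by (simp add: field_simps)
  have P3: "X * (r/w - 1/?N) + Y * (1/?N - 1/w) \<ge> 1/(?N-1) * (r/w - 1/?N) + 1/(?N-1) * (1/?N - 1/w)"
    using X Y ca0 cb0 by (intro add_mono mult_right_mono) auto
  have A: "2 * psi V E r (1/2) S u v \<ge> 1/(?N-1) * (r/w - 1/?N + (1/?N - 1/w))"
    using P1 P2 P3 distrib_left[of "1/(?N-1)" "r/w - 1/?N" "1/?N - 1/w"] by linarith
  have eq: "r/w - 1/?N + (1/?N - 1/w) = (r-1)/w" by (simp add: diff_divide_distrib)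
  have ge: "(r-1)/w \<ge> (r-1)/(r*?N)" using wle wpos r by (intro divide_left_mono) auto
  have "1/(?N-1) * ((r-1)/(r*?N)) \<le> 1/(?N-1) * ((r-1)/w)"
    by (intro mult_left_mono) (use ge N2' in auto)
  hence B: "2 * psi V E r (1/2) S u v \<ge> 1/(?N-1) * ((r-1)/(r*?N))"
    using A eq by simp
  have C: "1/(?N-1) * ((r-1)/(r*?N)) \<ge> 2 * ((r - 1) / (r * ?N ^ 3))"
  proof -
    have "0 \<le> (?N-1)*(?N-1)" by simp
    moreover have "(?N-1)*(?N-1) = ?N*?N - 2*?N + 1" by (simp add: algebra_simps)
    moreover have "2 * (?N - 1) = 2 * ?N - 2" by simp
    ultimately have "2 * (?N - 1) \<le> ?N * ?N" by linarith
    hence h: "2 * (?N - 1) * (r*?N) \<le> ?N * ?N * (r*?N)" using r N2' by (intro mult_right_mono mult_nonneg_nonneg) auto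
    have "2 * ((?N - 1) * (r*?N)) = 2 * (?N - 1) * (r*?N)" by (rule mult.assoc[symmetric])
    also have "\<dots> \<le> ?N * ?N * (r*?N)" by (rule h)
    also have "\<dots> = r*?N^3" by (simp add: power3_eq_cube algebra_simps)
    finally have le: "2 * ((?N - 1) * (r*?N)) \<le> r*?N^3" .
    have pos: "(?N - 1) * (r*?N) > 0" using r N2' by simp
    have "1/(r*?N^3/2) \<le> 1/((?N - 1) * (r*?N))"
      using le pos by (intro frac_le) auto
    hence "(r-1) * (1/(r*?N^3/2)) \<le> (r-1) * (1/((?N - 1) * (r*?N)))"
      using r by (intro mult_left_mono) auto
    moreover have "(r-1) * (1/(r*?N^3/2)) = 2 * ((r - 1) / (r * ?N ^ 3))" by simp
    moreover have "(r-1) * (1/((?N - 1) * (r*?N))) = 1/(?N-1) * ((r-1)/(r*?N))" by simp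
    ultimately show ?thesis by linarith
  qed
  show ?thesis using B C by linarith
qed



lemma sum_delta_gen:
  fixes h :: "'x \<Rightarrow> 'y \<Rightarrow> real"
  assumes "finite B" "finite A" "\<And>x. x \<in> A \<Longrightarrow> finite (C x)"
    and "\<And>x y. x \<in> A \<Longrightarrow> y \<in> C x \<Longrightarrow> c x y \<in> B"
  shows "(\<Sum>T\<in>B. (\<Sum>x\<in>A. \<Sum>y\<in>C x. h x y * (if c x y = T then 1 else 0)) * g T)
       = (\<Sum>x\<in>A. \<Sum>y\<in>C x. h x y * g (c x y))"
proof -
  have "(\<Sum>T\<in>B. (\<Sum>x\<in>A. \<Sum>y\<in>C x. h x y * (if c x y = T then 1 else 0)) * g T)
      = (\<Sum>T\<in>B. \<Sum>x\<in>A. \<Sum>y\<in>C x. h x y * (if c x y = T then 1 else 0) * g T)"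
    by (simp add: sum_distrib_right)
  also have "\<dots> = (\<Sum>x\<in>A. \<Sum>T\<in>B. \<Sum>y\<in>C x. h x y * (if c x y = T then 1 else 0) * g T)"
    by (rule sum.swap)
  also have "\<dots> = (\<Sum>x\<in>A. \<Sum>y\<in>C x. \<Sum>T\<in>B. h x y * (if c x y = T then 1 else 0) * g T)"
    by (rule sum.cong[OF refl], rule sum.swap)
  also have "\<dots> = (\<Sum>x\<in>A. \<Sum>y\<in>C x. h x y * g (c x y))"
  proof (rule sum.cong[OF refl], rule sum.cong[OF refl])
    fix x y assume x: "x \<in> A" and y: "y \<in> C x"
    have "(\<Sum>T\<in>B. h x y * (if c x y = T then 1 else 0) * g T) = (\<Sum>T\<in>B. if c x y = T then h x y * g T else 0)"
      by (rule sum.cong) auto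
    also have "\<dots> = h x y * g (c x y)" using assms(1) assms(4)[OF x y] by (simp add: sum.delta)
    finally show "(\<Sum>T\<in>B. h x y * (if c x y = T then 1 else 0) * g T) = h x y * g (c x y)" .
  qed
  finally show ?thesis .
qed

lemma copy_step_sub: "S \<subseteq> V \<Longrightarrow> v \<in> V \<Longrightarrow> copy_step S u v \<in> Pow V"
  unfolding copy_step_def by auto

lemma trans_expect:
  assumes g: "simple_graph V E" and SV: "S \<subseteq> V"
  shows "(\<Sum>T\<in>Pow V. trans_prob V E r \<delta> S T * h T)
    = (\<Sum>v\<in>V. \<Sum>u\<in>nbrs V E v. (\<delta> * (1 / real (card V)) * (fit r S u / wnb V E r S v)) * h (copy_step S u v))
    + (\<Sum>u\<in>V. \<Sum>v\<in>nbrs V E u. ((1 - \<delta>) * (fit r S u / wtot V r S) * (1 / real (deg V E u))) * h (copy_step S u v))"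
proof -
  have fin: "finite V" using sg_facts[OF g] by auto
  have nbV: "\<And>x. nbrs V E x \<subseteq> V" unfolding nbrs_def by auto
  have tp: "trans_prob V E r \<delta> S T =
     (\<Sum>v\<in>V. \<Sum>u\<in>nbrs V E v. (\<delta> * (1 / real (card V)) * (fit r S u / wnb V E r S v)) * (if copy_step S u v = T then 1 else 0))
   + (\<Sum>u\<in>V. \<Sum>v\<in>nbrs V E u. ((1 - \<delta>) * (fit r S u / wtot V r S) * (1 / real (deg V E u))) * (if copy_step S u v = T then 1 else 0))"
    for T
    unfolding trans_prob_def by (simp add: sum_distrib_left mult.assoc)
  have "(\<Sum>T\<in>Pow V. trans_prob V E r \<delta> S T * h T)
     = (\<Sum>T\<in>Pow V. (\<Sum>v\<in>V. \<Sum>u\<in>nbrs V E v. (\<delta> * (1 / real (card V)) * (fit r S u / wnb V E r S v)) * (if copy_step S u v = T then 1 else 0)) * h T)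
     + (\<Sum>T\<in>Pow V. (\<Sum>u\<in>V. \<Sum>v\<in>nbrs V E u. ((1 - \<delta>) * (fit r S u / wtot V r S) * (1 / real (deg V E u))) * (if copy_step S u v = T then 1 else 0)) * h T)"
    unfolding tp by (simp add: distrib_right sum.distrib)
  also have "\<dots> = (\<Sum>v\<in>V. \<Sum>u\<in>nbrs V E v. (\<delta> * (1 / real (card V)) * (fit r S u / wnb V E r S v)) * h (copy_step S u v))
    + (\<Sum>u\<in>V. \<Sum>v\<in>nbrs V E u. ((1 - \<delta>) * (fit r S u / wtot V r S) * (1 / real (deg V E u))) * h (copy_step S u v))"
    by (intro arg_cong2[where f="(+)"] sum_delta_gen[where B="Pow V"])
       (use fin nbV SV in \<open>auto simp: nbrs_finite[OF g] copy_step_def\<close>)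
  finally show ?thesis .
qed

lemma boundary_edge:
  assumes cg: "connected_graph V E" and SV: "S \<subseteq> V" and ne: "S \<noteq> {}" and nV: "S \<noteq> V"
  shows "\<exists>u v. E u v \<and> u \<in> S \<and> v \<notin> S"
proof -
  obtain x where x: "x \<in> S" using ne by auto
  obtain y where y: "y \<in> V" "y \<notin> S" using SV nV by auto
  have "E\<^sup>*\<^sup>* x y" using cg x y SV unfolding connected_graph_def by auto
  then show ?thesis using y(2)
  proof (induction rule: rtranclp_induct)
    case base then show ?case using x by auto
  next
    case (step z w)
    show ?case
    proof (cases "z \<in> S")
      case True then show ?thesis using step by auto
    next
      case False then show ?thesis using step.IH by auto
    qed
  qed
qed

lemma has_nbr:
  assumes cg: "connected_graph V E" and x: "x \<in> V" and y: "y \<in> V" "y \<noteq> x"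
  shows "nbrs V E x \<noteq> {}"
proof -
  have g: "simple_graph V E" using cg unfolding connected_graph_def by auto
  have "E\<^sup>*\<^sup>* x y" using cg x y unfolding connected_graph_def by auto
  then obtain z where "E x z" using y(2) by (metis converse_rtranclpE)
  then show ?thesis using sg_facts(3)[OF g] unfolding nbrs_def by blast
qed

lemma nb_sum:
  assumes g: "simple_graph V E"
  shows "(\<Sum>v\<in>V. \<Sum>u\<in>nbrs V E v. F u v) = (\<Sum>u\<in>V. \<Sum>v\<in>V. if E u v then F u v else 0)"
proof -
  have fin: "finite V" using sg_facts[OF g] by auto
  have "(\<Sum>v\<in>V. \<Sum>u\<in>nbrs V E v. F u v) = (\<Sum>v\<in>V. \<Sum>u\<in>V. if E v u then F u v else 0)"
    unfolding nbrs_def using fin by (simp add: sum.inter_filter)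
  also have "\<dots> = (\<Sum>u\<in>V. \<Sum>v\<in>V. if E v u then F u v else 0)" by (rule sum.swap)
  also have "\<dots> = (\<Sum>u\<in>V. \<Sum>v\<in>V. if E u v then F u v else 0)"
    using sg_facts(4)[OF g] by (intro sum.cong refl) metis
  finally show ?thesis .
qed

lemma nb_sum2:
  assumes g: "simple_graph V E"
  shows "(\<Sum>u\<in>V. \<Sum>v\<in>nbrs V E u. F u v) = (\<Sum>u\<in>V. \<Sum>v\<in>V. if E u v then F u v else 0)"
proof -
  have fin: "finite V" using sg_facts[OF g] by auto
  show ?thesis unfolding nbrs_def using fin by (simp add: sum.inter_filter)
qed

lemma trans_prob_nonneg:
  assumes "0 \<le> \<delta>" "\<delta> \<le> 1" "r > 0"
  shows "trans_prob V E r \<delta> S T \<ge> 0"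
proof -
  have f: "\<And>x. fit r S x \<ge> 0" using assms unfolding fit_def by auto
  have wn: "\<And>x. wnb V E r S x \<ge> 0" unfolding wnb_def using f by (simp add: sum_nonneg)
  have wt: "wtot V r S \<ge> 0" unfolding wtot_def using f by (simp add: sum_nonneg)
  show ?thesis unfolding trans_prob_def using assms f wn wt
    by (intro add_nonneg_nonneg mult_nonneg_nonneg sum_nonneg) auto
qed

lemma not_absorbed_nonneg:
  assumes "0 \<le> \<delta>" "\<delta> \<le> 1" "r > 0"
  shows "not_absorbed V E r \<delta> n S \<ge> 0"
proof (induction n arbitrary: S)
  case 0 then show ?case by simp
next
  case (Suc n) then show ?case
    using trans_prob_nonneg[OF assms] by (auto intro!: sum_nonneg mult_nonneg_nonneg)
qed



lemma drift_eq:
  assumes g: "simple_graph V E" and SV: "S \<subseteq> V"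
    and nb: "\<And>x. x \<in> V \<Longrightarrow> nbrs V E x \<noteq> {}" and r: "r > 0"
  shows "(\<Sum>T\<in>Pow V. trans_prob V E r \<delta> S T * (real (card V) - real (card T)))
       = (real (card V) - real (card S))
         - (\<Sum>u\<in>V. \<Sum>v\<in>V. if E u v \<and> u \<in> S \<and> v \<notin> S then psi V E r \<delta> S u v else 0)"
proof -
  define N where "N = real (card V)"
  define h where "h = (\<lambda>T::'a set. N - real (card T))"
  define w where "w = wtot V r S"
  define ind where "ind = (\<lambda>u v. (if u \<in> S \<and> v \<notin> S then 1 else 0) - (if u \<notin> S \<and> v \<in> S then 1 else (0::real)))"
  define k1 where "k1 = (\<lambda>u v. \<delta> * (1 / N) * (fit r S u / wnb V E r S v))"
  define k2 where "k2 = (\<lambda>u (v::'a). (1 - \<delta>) * (fit r S u / w) * (1 / real (deg V E u)))"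
  have fin: "finite V" using sg_facts[OF g] by auto
  have finS: "finite S" using fin SV finite_subset by auto
  have nbV: "\<And>x. nbrs V E x \<subseteq> V" unfolding nbrs_def by auto
  have nbf: "\<And>x. finite (nbrs V E x)" using nbrs_finite[OF g] .
  have Vne: "V \<noteq> {}" using g unfolding simple_graph_def by auto
  have Npos: "N > 0" unfolding N_def using fin Vne by (simp add: card_gt_0_iff)
  have fitpos: "\<And>x. fit r S x > 0" using r unfolding fit_def by auto
  have wpos: "w > 0" unfolding w_def wtot_def using fin Vne fitpos by (simp add: sum_pos)
  have wnpos: "\<And>x. x \<in> V \<Longrightarrow> wnb V E r S x > 0"
    unfolding wnb_def using nbf nb fitpos by (simp add: sum_pos)
  have degpos: "\<And>x. x \<in> V \<Longrightarrow> real (deg V E x) > 0"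
    unfolding deg_def using nbf nb by (simp add: card_gt_0_iff)
  have hc: "h (copy_step S u v) = h S - ind u v" if "v \<in> V" for u v
  proof -
    have "\<And>x. x \<in> S \<Longrightarrow> card S \<ge> 1" using finS
      by (metis One_nat_def Suc_leI card_gt_0_iff empty_iff)
    then show ?thesis unfolding h_def ind_def copy_step_def using finS
    by (auto simp: card_insert_if card_Diff_singleton_if of_nat_diff)
  qed
  have E1: "(\<Sum>T\<in>Pow V. trans_prob V E r \<delta> S T * h T)
     = (\<Sum>v\<in>V. \<Sum>u\<in>nbrs V E v. k1 u v * h (copy_step S u v))
     + (\<Sum>u\<in>V. \<Sum>v\<in>nbrs V E u. k2 u v * h (copy_step S u v))"
    unfolding k1_def k2_def N_def w_def by (rule trans_expect[OF g SV])
  have S1: "(\<Sum>v\<in>V. \<Sum>u\<in>nbrs V E v. k1 u v * h (copy_step S u v))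
      = h S * \<delta> - (\<Sum>v\<in>V. \<Sum>u\<in>nbrs V E v. k1 u v * ind u v)"
  proof -
    have "(\<Sum>v\<in>V. \<Sum>u\<in>nbrs V E v. k1 u v * h (copy_step S u v))
        = (\<Sum>v\<in>V. \<Sum>u\<in>nbrs V E v. (k1 u v * h S - k1 u v * ind u v))"
      by (intro sum.cong refl) (simp add: hc right_diff_distrib)
    also have "\<dots> = (\<Sum>v\<in>V. \<Sum>u\<in>nbrs V E v. k1 u v) * h S - (\<Sum>v\<in>V. \<Sum>u\<in>nbrs V E v. k1 u v * ind u v)"
      by (simp add: sum_subtractf sum_distrib_right)
    also have "(\<Sum>v\<in>V. \<Sum>u\<in>nbrs V E v. k1 u v) = \<delta>"
    proof -
      have "(\<Sum>u\<in>nbrs V E v. k1 u v) = \<delta> / N" if "v \<in> V" for v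
      proof -
        have "(\<Sum>u\<in>nbrs V E v. k1 u v) = \<delta> * (1 / N) * ((\<Sum>u\<in>nbrs V E v. fit r S u) / wnb V E r S v)"
          unfolding k1_def by (simp add: sum_distrib_left sum_divide_distrib)
        also have "(\<Sum>u\<in>nbrs V E v. fit r S u) / wnb V E r S v = 1"
          using wnpos[OF that] unfolding wnb_def by simp
        finally show ?thesis by simp
      qed
      then have "(\<Sum>v\<in>V. \<Sum>u\<in>nbrs V E v. k1 u v) = (\<Sum>v\<in>V. \<delta> / N)" by simp
      also have "\<dots> = \<delta>" using Npos unfolding N_def by simp
      finally show ?thesis .
    qed
    finally show ?thesis by simp
  qed
  have S2: "(\<Sum>u\<in>V. \<Sum>v\<in>nbrs V E u. k2 u v * h (copy_step S u v))
      = h S * (1 - \<delta>) - (\<Sum>u\<in>V. \<Sum>v\<in>nbrs V E u. k2 u v * ind u v)"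
  proof -
    have "(\<Sum>u\<in>V. \<Sum>v\<in>nbrs V E u. k2 u v * h (copy_step S u v))
        = (\<Sum>u\<in>V. \<Sum>v\<in>nbrs V E u. (k2 u v * h S - k2 u v * ind u v))"
      by (intro sum.cong refl) (auto simp add: hc[OF subsetD[OF nbV]] right_diff_distrib)
    also have "\<dots> = (\<Sum>u\<in>V. \<Sum>v\<in>nbrs V E u. k2 u v) * h S - (\<Sum>u\<in>V. \<Sum>v\<in>nbrs V E u. k2 u v * ind u v)"
      by (simp add: sum_subtractf sum_distrib_right)
    also have "(\<Sum>u\<in>V. \<Sum>v\<in>nbrs V E u. k2 u v) = 1 - \<delta>"
    proof -
      have "(\<Sum>v\<in>nbrs V E u. k2 u v) = (1 - \<delta>) * (fit r S u / w)" if "u \<in> V" for u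
      proof -
        have "(\<Sum>v\<in>nbrs V E u. k2 u v) = (1 - \<delta>) * (fit r S u / w) * (real (deg V E u) * (1 / real (deg V E u)))"
          unfolding k2_def deg_def by simp
        also have "real (deg V E u) * (1 / real (deg V E u)) = 1" using degpos[OF that] by simp
        finally show ?thesis by simp
      qed
      then have "(\<Sum>u\<in>V. \<Sum>v\<in>nbrs V E u. k2 u v) = (\<Sum>u\<in>V. (1 - \<delta>) * (fit r S u / w))" by simp
      also have "\<dots> = (1 - \<delta>) * ((\<Sum>u\<in>V. fit r S u) / w)" by (simp add: sum_distrib_left sum_divide_distrib)
      also have "(\<Sum>u\<in>V. fit r S u) / w = 1" using wpos unfolding w_def wtot_def by simp
      finally show ?thesis by simp
    qed
    finally show ?thesis by simp
  qed
  define a where "a = (\<lambda>u v. k1 u v + k2 u v)"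
  have D: "(\<Sum>v\<in>V. \<Sum>u\<in>nbrs V E v. k1 u v * ind u v) + (\<Sum>u\<in>V. \<Sum>v\<in>nbrs V E u. k2 u v * ind u v)
      = (\<Sum>u\<in>V. \<Sum>v\<in>V. if E u v \<and> u \<in> S \<and> v \<notin> S then psi V E r \<delta> S u v else 0)"
  proof -
    have "(\<Sum>v\<in>V. \<Sum>u\<in>nbrs V E v. k1 u v * ind u v) + (\<Sum>u\<in>V. \<Sum>v\<in>nbrs V E u. k2 u v * ind u v)
      = (\<Sum>u\<in>V. \<Sum>v\<in>V. if E u v then k1 u v * ind u v else 0) + (\<Sum>u\<in>V. \<Sum>v\<in>V. if E u v then k2 u v * ind u v else 0)"
      by (rule arg_cong2[where f="(+)"], rule nb_sum[OF g], rule nb_sum2[OF g])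
    also have "\<dots> = (\<Sum>u\<in>V. \<Sum>v\<in>V. (if E u v \<and> u \<in> S \<and> v \<notin> S then a u v else 0) - (if E u v \<and> u \<notin> S \<and> v \<in> S then a u v else 0))"
      unfolding sum.distrib[symmetric] by (intro sum.cong refl) (auto simp: a_def ind_def algebra_simps)
    also have "\<dots> = (\<Sum>u\<in>V. \<Sum>v\<in>V. if E u v \<and> u \<in> S \<and> v \<notin> S then a u v else 0) - (\<Sum>u\<in>V. \<Sum>v\<in>V. if E u v \<and> u \<notin> S \<and> v \<in> S then a u v else 0)"
      by (simp add: sum_subtractf)
    also have "(\<Sum>u\<in>V. \<Sum>v\<in>V. if E u v \<and> u \<notin> S \<and> v \<in> S then a u v else 0) = (\<Sum>u\<in>V. \<Sum>v\<in>V. if E u v \<and> u \<in> S \<and> v \<notin> S then a v u else 0)"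
    proof -
      have "(\<Sum>u\<in>V. \<Sum>v\<in>V. if E u v \<and> u \<notin> S \<and> v \<in> S then a u v else 0) = (\<Sum>v\<in>V. \<Sum>u\<in>V. if E u v \<and> u \<notin> S \<and> v \<in> S then a u v else 0)"
        by (rule sum.swap)
      also have "\<dots> = (\<Sum>u\<in>V. \<Sum>v\<in>V. if E u v \<and> u \<in> S \<and> v \<notin> S then a v u else 0)"
        using sg_facts(4)[OF g] by (intro sum.cong refl) metis
      finally show ?thesis .
    qed
    also have "(\<Sum>u\<in>V. \<Sum>v\<in>V. if E u v \<and> u \<in> S \<and> v \<notin> S then a u v else 0) - (\<Sum>u\<in>V. \<Sum>v\<in>V. if E u v \<and> u \<in> S \<and> v \<notin> S then a v u else 0)
       = (\<Sum>u\<in>V. \<Sum>v\<in>V. if E u v \<and> u \<in> S \<and> v \<notin> S then a u v - a v u else 0)"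
      unfolding sum_subtractf[symmetric] by (intro sum.cong refl) auto
    also have "\<dots> = (\<Sum>u\<in>V. \<Sum>v\<in>V. if E u v \<and> u \<in> S \<and> v \<notin> S then psi V E r \<delta> S u v else 0)"
    proof (intro sum.cong refl)
      fix u v assume u: "u \<in> V" and v: "v \<in> V"
      show "(if E u v \<and> u \<in> S \<and> v \<notin> S then a u v - a v u else 0) = (if E u v \<and> u \<in> S \<and> v \<notin> S then psi V E r \<delta> S u v else 0)"
        using wnpos[OF u] wnpos[OF v] degpos[OF u] degpos[OF v] wpos Npos
        by (auto simp: a_def k1_def k2_def psi_def fit_def w_def N_def field_simps)
    qed
    finally show ?thesis .
  qed
  show ?thesis
    using E1 S1 S2 D unfolding h_def N_def by (simp add: algebra_simps)
qed



lemma ennsum_le: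
  assumes "\<And>n. (\<Sum>k<n. f k) \<le> B" "\<And>k. f k \<ge> 0"
  shows "(\<Sum>n. ennreal (f n)) \<le> ennreal B"
proof (rule suminf_le_const)
  show "summable (\<lambda>n. ennreal (f n))" by simp
  fix n show "(\<Sum>k<n. ennreal (f k)) \<le> ennreal B" using assms by (simp add: ennreal_leI)
qed

lemma drift_le:
  assumes cg: "connected_graph V E" and r: "r > 1" and SV: "S \<subseteq> V"
    and ne: "S \<noteq> {}" and nV: "S \<noteq> V"
  shows "(\<Sum>T\<in>Pow V. trans_prob V E r (1/2) S T * (real (card V) - real (card T)))
       \<le> (real (card V) - real (card S)) - (r - 1) / (r * real (card V) ^ 3)"
proof -
  have g: "simple_graph V E" using cg unfolding connected_graph_def by auto
  have fin: "finite V" using sg_facts[OF g] by auto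
  obtain x0 where x0: "x0 \<in> S" using ne by auto
  obtain y0 where y0: "y0 \<in> V" "y0 \<notin> S" using SV nV by auto
  have nb: "nbrs V E z \<noteq> {}" if z: "z \<in> V" for z
  proof (cases "z = x0")
    case True then show ?thesis using has_nbr[OF cg z y0(1)] y0 x0 by auto
  next
    case False then show ?thesis using has_nbr[OF cg z _ False[symmetric]] x0 SV by auto
  qed
  define d where "d = (r - 1) / (r * real (card V) ^ 3)"
  have d0: "d \<ge> 0" unfolding d_def using r by simp
  obtain u0 v0 where e0: "E u0 v0" "u0 \<in> S" "v0 \<notin> S" using boundary_edge[OF cg SV ne nV] by blast
  have u0: "u0 \<in> V" and v0: "v0 \<in> V" using sg_facts[OF g] e0 by auto
  define F where "F = (\<lambda>u v. if E u v \<and> u \<in> S \<and> v \<notin> S then psi V E r (1/2) S u v else 0)"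
  have F0: "F u v \<ge> 0" for u v
    unfolding F_def using psi_bound[OF g r SV] d0 unfolding d_def by (auto intro: order_trans)
  have "d \<le> F u0 v0" unfolding F_def d_def using psi_bound[OF g r SV e0] e0 by simp
  also have "F u0 v0 \<le> (\<Sum>v\<in>V. F u0 v)" using fin v0 F0 by (intro member_le_sum) auto
  also have "\<dots> \<le> (\<Sum>u\<in>V. \<Sum>v\<in>V. F u v)" using fin u0 F0 by (intro member_le_sum sum_nonneg) auto
  finally have dle: "d \<le> (\<Sum>u\<in>V. \<Sum>v\<in>V. F u v)" .
  show ?thesis
    using drift_eq[OF g SV nb, of r "1/2"] r dle unfolding F_def d_def by simp
qed

lemma main_bound:
  assumes cg: "connected_graph V E" and r: "r > 1"
  shows "\<forall>S. S \<subseteq> V \<longrightarrow> (r - 1) / (r * real (card V) ^ 3) * (\<Sum>k<n. not_absorbed V E r (1/2) k S)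
           \<le> real (card V) - real (card S)"
proof (induction n)
  case 0
  show ?case
  proof (intro allI impI)
    fix S assume "S \<subseteq> V"
    moreover have "finite V" using cg unfolding connected_graph_def simple_graph_def by auto
    ultimately have "card S \<le> card V" by (rule card_mono[rotated])
    then show "(r - 1) / (r * real (card V) ^ 3) * (\<Sum>k<0. not_absorbed V E r (1/2) k S) \<le> real (card V) - real (card S)"
      by simp
  qed
next
  case (Suc n)
  define d where "d = (r - 1) / (r * real (card V) ^ 3)"
  have d0: "d \<ge> 0" unfolding d_def using r by simp
  have fin: "finite V" using cg unfolding connected_graph_def simple_graph_def by auto
  show ?case
  proof (intro allI impI)
    fix S assume SV: "S \<subseteq> V"
    have cS: "card S \<le> card V" using fin SV by (rule card_mono)
    show "(r - 1) / (r * real (card V) ^ 3) * (\<Sum>k<Suc n. not_absorbed V E r (1/2) k S) \<le> real (card V) - real (card S)"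
    proof (cases "absorbed V S")
      case True
      have "\<And>k. not_absorbed V E r (1/2) k S = 0" using True by (case_tac k) auto
      then show ?thesis using cS by simp
    next
      case False
      then have ne: "S \<noteq> {}" and nV: "S \<noteq> V" unfolding absorbed_def by auto
      let ?p = "\<lambda>k T. not_absorbed V E r (1/2) k T"
      let ?P = "\<lambda>T. trans_prob V E r (1/2) S T"
      have P0: "\<And>T. ?P T \<ge> 0" using r by (intro trans_prob_nonneg) auto
      have "(\<Sum>k<Suc n. ?p k S) = ?p 0 S + (\<Sum>k<n. ?p (Suc k) S)" by (rule sum.lessThan_Suc_shift)
      also have "?p 0 S = 1" using False by simp
      also have "(\<Sum>k<n. ?p (Suc k) S) = (\<Sum>k<n. \<Sum>T\<in>Pow V. ?P T * ?p k T)" using False by simp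
      also have "\<dots> = (\<Sum>T\<in>Pow V. ?P T * (\<Sum>k<n. ?p k T))" by (subst sum.swap) (simp add: sum_distrib_left)
      finally have eq: "(\<Sum>k<Suc n. ?p k S) = 1 + (\<Sum>T\<in>Pow V. ?P T * (\<Sum>k<n. ?p k T))" .
      have "d * (\<Sum>T\<in>Pow V. ?P T * (\<Sum>k<n. ?p k T)) = (\<Sum>T\<in>Pow V. ?P T * (d * (\<Sum>k<n. ?p k T)))"
        by (simp add: sum_distrib_left mult.left_commute)
      also have "\<dots> \<le> (\<Sum>T\<in>Pow V. ?P T * (real (card V) - real (card T)))"
      proof (rule sum_mono)
        fix T assume "T \<in> Pow V"
        then have "d * (\<Sum>k<n. ?p k T) \<le> real (card V) - real (card T)" using Suc.IH unfolding d_def by auto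
        then show "?P T * (d * (\<Sum>k<n. ?p k T)) \<le> ?P T * (real (card V) - real (card T))"
          using P0 by (rule mult_left_mono)
      qed
      also have "\<dots> \<le> (real (card V) - real (card S)) - d"
        unfolding d_def by (rule drift_le[OF cg r SV ne nV])
      finally show ?thesis unfolding eq d_def[symmetric] by (simp add: distrib_left)
    qed
  qed
qed

theorem mainTheorem12:
  fixes V :: "'a set" and E :: "'a \<Rightarrow> 'a \<Rightarrow> bool" and r :: real
  assumes "connected_graph V E" and "r > 1"
  shows "(\<forall>S u v. S \<subseteq> V \<and> S \<noteq> {} \<and> S \<noteq> V \<and> E u v \<and> u \<in> S \<and> v \<notin> S \<longrightarrow>
            psi V E r (1/2) S u v \<ge> (r - 1) / (r * real (card V) ^ 3))
       \<and> AT V E r (1/2) \<le> ennreal (r / (r - 1) * real (card V) ^ 4)"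
proof
  have g: "simple_graph V E" using assms(1) unfolding connected_graph_def by auto
  show "\<forall>S u v. S \<subseteq> V \<and> S \<noteq> {} \<and> S \<noteq> V \<and> E u v \<and> u \<in> S \<and> v \<notin> S \<longrightarrow>
            psi V E r (1/2) S u v \<ge> (r - 1) / (r * real (card V) ^ 3)"
    using psi_bound[OF g assms(2)] by blast
  define N where "N = real (card V)"
  define d where "d = (r - 1) / (r * N ^ 3)"
  have fin: "finite V" and Vne: "V \<noteq> {}" using g unfolding simple_graph_def by auto
  have Npos: "N > 0" unfolding N_def using fin Vne by (simp add: card_gt_0_iff)
  have dpos: "d > 0" unfolding d_def using assms(2) Npos by simp
  have Nd: "N / d = r / (r - 1) * N ^ 4" unfolding d_def using assms(2) Npos
    by (simp add: field_simps power_numeral_reduce)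
  show "AT V E r (1/2) \<le> ennreal (r / (r - 1) * real (card V) ^ 4)"
    unfolding AT_def
  proof (rule SUP_least)
    fix S0 assume S0: "S0 \<in> Pow V"
    show "AT_from V E r (1/2) S0 \<le> ennreal (r / (r - 1) * real (card V) ^ 4)"
      unfolding AT_from_def
    proof (rule ennsum_le)
      fix n
      have "d * (\<Sum>k<n. not_absorbed V E r (1/2) k S0) \<le> N - real (card S0)"
        using main_bound[OF assms, of n] S0 unfolding d_def N_def by auto
      also have "\<dots> \<le> N" by simp
      finally have "(\<Sum>k<n. not_absorbed V E r (1/2) k S0) \<le> N / d"
        using dpos by (simp add: le_divide_eq mult.commute)
      then show "(\<Sum>k<n. not_absorbed V E r (1/2) k S0) \<le> r / (r - 1) * real (card V) ^ 4"
        using Nd unfolding N_def by simp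
    next
      fix k show "not_absorbed V E r (1/2) k S0 \<ge> 0"
        using assms(2) by (intro not_absorbed_nonneg) auto
    qed
  qed
qed

end
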